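(* On the event described in Lemma 2.4 (namely: (a) whenever $p_j$ and $a_i$ interview each other, $i\le j+8\log n$; and (b) whenever the algorithm considers a proposal to $p_j$, all $p_{j'}$ with $j'<\min(j,n-8\log n)$ are matched), for every $k\in[n]$ and at every point of the execution of the Adaptive Algorithm, the current matching $\mu$ satisfies $$\big|\{(a_i,p_j)\in\mu : i\ge k,\ j<k\}\big|\le 8\log n.$$
   Context: Logarithms are base 2. Model. Let $A=\{a_1,\dots,a_n\}$ be a set of applicants and $P=\{p_1,\dots,p_n\}$ a set of positions. Each applicant $a_i$ has a publicly known value $u_i\in\mathbb R$ and each position $p_j$ a publicly known value $v_j\in\mathbb R$, indexed so that $u_1\ge u_2\ge\dots\ge u_n$ and $v_1\ge v_2\ge\dots\ge v_n$. The random variables $\epsilon^A_{ij}$, $\epsilon^P_{ji}$ ($i,j\in[n]$) are mutually independent and identically distributed according to a known distribution symmetric about $0$ (mean zero). The utility of $a_i$ for $p_j$ is $v_j+\epsilon^A_{ij}$ and the utility of $p_j$ for $a_i$ is $u_i+\epsilon^P_{ji}$; the values $\epsilon^A_{ij},\epsilon^P_{ji}$ become known only when $a_i$ and $p_j$ interview each other. The observed utility $v^o_{ij}$ of $a_i$ for $p_j$ equals $v_j+\epsilon^A_{ij}$ if $a_i,p_j$ have interviewed and $v_j$ otherwise; $u^o_{ji}$ is defined symmetrically ($u_i+\epsilon^P_{ji}$ or $u_i$). Write $p_j\succ_{a_i}p_{j'}$ iff $v^o_{ij}>v^o_{ij'}$ and $a_i\succ_{p_j}a_{i'}$ iff $u^o_{ji}>u^o_{ji'}$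 (ties broken in favor of the smaller index); every agent prefers any partner to being unmatched. For a matching $\mu$, $\mu(x)$ denotes the partner of $x$ ($\emptyset$ if unmatched). Adaptive Algorithm. Initially all agents are unmatched and $v^o_{ij}=v_j$, $u^o_{ji}=u_i$ for all $i,j$. For an unmatched applicant $a$, let $\beta(a)$ be $a$'s most preferred position (w.r.t. current observed utilities) that has not yet rejected $a$. While some applicant is unmatched: let $j^*$ be the smallest index such that $\beta(a_i)=p_{j^*}$ for some unmatched $a_i$; let $a_{i^*}$ be $p_{j^*}$'s favorite applicant among $\{a_i:\beta(a_i)=p_{j^*},\mu(a_i)=\emptyset\}$. If $a_{i^*},p_{j^*}$ have not interviewed and ($i^*\le j^*$ or $a_{i^*}\succ_{p_{j^*}}\mu(p_{j^*})$), then they interview and $v^o_{i^*j^*},u^o_{j^*i^*}$ are updated. Otherwise: if $\mu(p_{j^*})\succ_{p_{j^*}}a_{i^*}$, then $p_{j^*}$ rejects $a_{i^*}$; else $p_{j^*}$ rejects $\mu(p_{j^*})$ (if nonempty) and $a_{i^*},p_{j^*}$ become matched. When all applicants are matched, output $\mu$. *)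

theory Defs
  imports Complex_Main
begin

text \<open>Applicants a_1..a_n and positions p_1..p_n are represented by their indices in {1..n}.
  Parameters: n, applicant values u, position values v, noise terms
  eA i j (epsilon^A_{ij}) and eP j i (epsilon^P_{ji}).
  The execution of the Adaptive Algorithm is deterministic once the noise is realized.\<close>

record state =
  muA :: "nat \<Rightarrow> nat option"
  muP :: "nat \<Rightarrow> nat option"
  interviewed :: "(nat \<times> nat) set"
  rejected :: "(nat \<times> nat) set"      (* pairs (i,j): p_j has rejected a_i *)

definition init_state :: state where
  "init_state = \<lparr>muA = (\<lambda>_. None), muP = (\<lambda>_. None), interviewed = {}, rejected = {}\<rparr>"

definition vo :: "(nat \<Rightarrow> real) \<Rightarrow> (nat \<Rightarrow> nat \<Rightarrow> real) \<Rightarrow> state \<Rightarrow> nat \<Rightarrow> nat \<Rightarrow> real" where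
  "vo v eA s i j = v j + (if (i, j) \<in> interviewed s then eA i j else 0)"

definition uo :: "(nat \<Rightarrow> real) \<Rightarrow> (nat \<Rightarrow> nat \<Rightarrow> real) \<Rightarrow> state \<Rightarrow> nat \<Rightarrow> nat \<Rightarrow> real" where
  "uo u eP s j i = u i + (if (i, j) \<in> interviewed s then eP j i else 0)"

definition prefA where
  "prefA v eA s i j j' \<longleftrightarrow> vo v eA s i j > vo v eA s i j' \<or> (vo v eA s i j = vo v eA s i j' \<and> j < j')"

definition prefP where
  "prefP u eP s j i i' \<longleftrightarrow> uo u eP s j i > uo u eP s j i' \<or> (uo u eP s j i = uo u eP s j i' \<and> i < i')"

definition avail :: "nat \<Rightarrow> state \<Rightarrow> nat \<Rightarrow> nat set" where
  "avail n s i = {j \<in> {1..n}. (i, j) \<notin> rejected s}"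

definition beta where
  "beta n v eA s i = (if avail n s i = {} then None
     else Some (THE j. j \<in> avail n s i \<and> (\<forall>j'\<in>avail n s i. j' \<noteq> j \<longrightarrow> prefA v eA s i j j')))"

definition unmatched :: "nat \<Rightarrow> state \<Rightarrow> nat set" where
  "unmatched n s = {i \<in> {1..n}. muA s i = None}"

definition proposers where
  "proposers n v eA s = {i \<in> unmatched n s. beta n v eA s i \<noteq> None}"

definition jstar where
  "jstar n v eA s = Min ((\<lambda>i. the (beta n v eA s i)) ` proposers n v eA s)"

definition cands where
  "cands n v eA s = {i \<in> proposers n v eA s. beta n v eA s i = Some (jstar n v eA s)}"

definition istar where
  "istar n u v eA eP s = (THE i. i \<in> cands n v eA s \<and>
     (\<forall>i'\<in>cands n v eA s. i' \<noteq> i \<longrightarrow> prefP u eP s (jstar n v eA s) i i'))"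

definition beats_partner where
  "beats_partner u eP s j i = (case muP s j of None \<Rightarrow> True | Some i' \<Rightarrow> prefP u eP s j i i')"

definition partner_beats where
  "partner_beats u eP s j i = (case muP s j of None \<Rightarrow> False | Some i' \<Rightarrow> prefP u eP s j i' i)"

definition considers_proposal where
  "considers_proposal n v eA s \<longleftrightarrow> unmatched n s \<noteq> {} \<and> proposers n v eA s \<noteq> {}"

definition step where
  "step n u v eA eP s =
    (if \<not> considers_proposal n v eA s then s else
     (let j = jstar n v eA s; i = istar n u v eA eP s in
      if (i, j) \<notin> interviewed s \<and> (i \<le> j \<or> beats_partner u eP s j i)
      then s\<lparr>interviewed := insert (i, j) (interviewed s)\<rparr>
      else if partner_beats u eP s j i
      then s\<lparr>rejected := insert (i, j) (rejected s)\<rparr>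
      else (case muP s j of
              None \<Rightarrow> s\<lparr>muA := (muA s)(i := Some j), muP := (muP s)(j := Some i)\<rparr>
            | Some i' \<Rightarrow> s\<lparr>muA := (muA s)(i' := None, i := Some j),
                          muP := (muP s)(j := Some i),
                          rejected := insert (i', j) (rejected s)\<rparr>)))"

text \<open>State after k iterations; the points of the execution are exactly run ... k, k \<in> nat.\<close>
definition run where
  "run n u v eA eP k = (step n u v eA eP ^^ k) init_state"

definition event_a where
  "event_a n u v eA eP \<longleftrightarrow> (\<forall>k. \<forall>(i, j) \<in> interviewed (run n u v eA eP k).
       real i \<le> real j + 8 * log 2 (real n))"

definition event_b where
  "event_b n u v eA eP \<longleftrightarrow> (\<forall>k. let s = run n u v eA eP k in
       considers_proposal n v eA s \<longrightarrow>
       (\<forall>j'\<in>{1..n}. real j' < min (real (jstar n v eA s)) (real n - 8 * log 2 (real n))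
            \<longrightarrow> muP s j' \<noteq> None))"

end

theory Submission
  imports Defs
begin

lemma top_exists:
  assumes "finite C" "C \<noteq> {}"
    and tot: "\<And>x y. x \<noteq> y \<Longrightarrow> R x y \<or> R y x"
    and tr: "\<And>x y z. R x y \<Longrightarrow> R y z \<Longrightarrow> R x z"
  shows "\<exists>t\<in>C. \<forall>y\<in>C. y \<noteq> t \<longrightarrow> R t y"
  using assms(1,2)
proof (induction C rule: finite_ne_induct)
  case (singleton x) then show ?case by auto
next
  case (insert x F)
  then obtain t where t: "t \<in> F" "\<forall>y\<in>F. y \<noteq> t \<longrightarrow> R t y" by auto
  have "x \<noteq> t" using t insert by auto
  show ?case
  proof (cases "R x t")
    case True
    then show ?thesis using t tr insert by (metis insertCI insertE)
  next
    case False
    then have "R t x" using tot \<open>x \<noteq> t\<close> by blast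
    then show ?thesis using t by auto
  qed
qed

lemma prefP_total: "i \<noteq> i' \<Longrightarrow> prefP u eP s j i i' \<or> prefP u eP s j i' i"
  unfolding prefP_def by auto

lemma prefP_asym: "prefP u eP s j i i' \<Longrightarrow> \<not> prefP u eP s j i' i"
  unfolding prefP_def by auto

lemma prefP_trans: "prefP u eP s j a b \<Longrightarrow> prefP u eP s j b c \<Longrightarrow> prefP u eP s j a c"
  unfolding prefP_def by auto

lemma cands_props:
  assumes "considers_proposal n v eA s"
  shows "finite (cands n v eA s) \<and> cands n v eA s \<noteq> {}"
proof -
  have fin: "finite (proposers n v eA s)"
    unfolding proposers_def unmatched_def by auto
  have ne: "proposers n v eA s \<noteq> {}" using assms unfolding considers_proposal_def by auto
  have "jstar n v eA s \<in> (\<lambda>i. the (beta n v eA s i)) ` proposers n v eA s"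
    unfolding jstar_def using fin ne by (intro Min_in) auto
  then obtain i where i: "i \<in> proposers n v eA s" "the (beta n v eA s i) = jstar n v eA s" by auto
  then have "beta n v eA s i = Some (jstar n v eA s)"
    unfolding proposers_def by auto
  then have "i \<in> cands n v eA s" using i unfolding cands_def by auto
  moreover have "finite (cands n v eA s)" using fin unfolding cands_def by auto
  ultimately show ?thesis by auto
qed

lemma istar_in:
  assumes "considers_proposal n v eA s"
  shows "istar n u v eA eP s \<in> cands n v eA s"
proof -
  let ?C = "cands n v eA s" and ?R = "prefP u eP s (jstar n v eA s)"
  obtain t where t: "t \<in> ?C" "\<forall>y\<in>?C. y \<noteq> t \<longrightarrow> ?R t y"
    using top_exists[of ?C ?R] cands_props[OF assms] prefP_total prefP_trans by blast
  have ex1: "\<exists>!i. i \<in> ?C \<and> (\<forall>i'\<in>?C. i' \<noteq> i \<longrightarrow> ?R i i')"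
  proof (rule ex1I[of _ t])
    show "t \<in> ?C \<and> (\<forall>i'\<in>?C. i' \<noteq> t \<longrightarrow> ?R t i')" using t by auto
  next
    fix i assume "i \<in> ?C \<and> (\<forall>i'\<in>?C. i' \<noteq> i \<longrightarrow> ?R i i')"
    then show "i = t" using t prefP_asym by metis
  qed
  have "(THE i. i \<in> ?C \<and> (\<forall>i'\<in>?C. i' \<noteq> i \<longrightarrow> ?R i i')) \<in> ?C"
    using theI'[OF ex1] by blast
  then show ?thesis unfolding istar_def by simp
qed

definition Inv :: "state \<Rightarrow> bool" where
  "Inv s \<longleftrightarrow> (\<forall>i j. muA s i = Some j \<longleftrightarrow> muP s j = Some i) \<and>
     (\<forall>i j. muA s i = Some j \<longrightarrow> (i, j) \<in> interviewed s)"

lemma Inv_init: "Inv init_state"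
  unfolding Inv_def init_state_def by auto

lemma Inv_step:
  assumes "Inv s"
  shows "Inv (step n u v eA eP s)"
proof (cases "considers_proposal n v eA s")
  case False then show ?thesis using assms unfolding step_def by simp
next
  case True
  define j where "j = jstar n v eA s"
  define i where "i = istar n u v eA eP s"
  have iu: "muA s i = None"
    using istar_in[OF True] unfolding i_def cands_def proposers_def unmatched_def by auto
  have cons: "\<And>x y. muA s x = Some y \<longleftrightarrow> muP s y = Some x"
    and intv: "\<And>x y. muA s x = Some y \<Longrightarrow> (x, y) \<in> interviewed s"
    using assms unfolding Inv_def by auto
  show ?thesis
  proof (cases "(i, j) \<notin> interviewed s \<and> (i \<le> j \<or> beats_partner u eP s j i)")
    case True
    then show ?thesis using assms \<open>considers_proposal n v eA s\<close>
      unfolding step_def Inv_def Let_def i_def j_def by auto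
  next
    case c1: False
    show ?thesis
    proof (cases "partner_beats u eP s j i")
      case True
      then show ?thesis using assms \<open>considers_proposal n v eA s\<close> c1
        unfolding step_def Inv_def Let_def i_def j_def by auto
    next
      case c2: False
      show ?thesis
      proof (cases "muP s j")
        case None
        have ij: "(i, j) \<in> interviewed s" using c1 None unfolding beats_partner_def by auto
        have st: "step n u v eA eP s = s\<lparr>muA := (muA s)(i := Some j), muP := (muP s)(j := Some i)\<rparr>"
          using \<open>considers_proposal n v eA s\<close> c1 c2 None
          unfolding step_def Let_def i_def[symmetric] j_def[symmetric] by auto
        show ?thesis unfolding st Inv_def
          using cons intv ij iu None by (auto; metis option.simps(3))+
      next
        case (Some i')
        have "i \<noteq> i'" using Some cons iu by (metis option.simps(3))
        have ij: "(i, j) \<in> interviewed s"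
        proof (rule ccontr)
          assume "(i, j) \<notin> interviewed s"
          then have "\<not> prefP u eP s j i i'" using c1 Some unfolding beats_partner_def by auto
          moreover have "\<not> prefP u eP s j i' i" using c2 Some unfolding partner_beats_def by auto
          ultimately show False using prefP_total \<open>i \<noteq> i'\<close> by blast
        qed
        have st: "step n u v eA eP s = s\<lparr>muA := (muA s)(i' := None, i := Some j),
                          muP := (muP s)(j := Some i),
                          rejected := insert (i', j) (rejected s)\<rparr>"
          using \<open>considers_proposal n v eA s\<close> c1 c2 Some
          unfolding step_def Let_def i_def[symmetric] j_def[symmetric] by auto
        have i'j: "muA s i' = Some j" using cons Some by auto
        show ?thesis unfolding st Inv_def
          using cons intv ij iu Some i'j \<open>i \<noteq> i'\<close>
          by (auto; metis option.inject option.simps(3))+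
      qed
    qed
  qed
qed

lemma Inv_run: "Inv (run n u v eA eP t)"
  unfolding run_def
  by (induction t) (auto simp: Inv_init Inv_step)

theorem claim2p5:
  fixes n :: nat and u v :: "nat \<Rightarrow> real" and eA eP :: "nat \<Rightarrow> nat \<Rightarrow> real"
  assumes "\<And>i i'. 1 \<le> i \<Longrightarrow> i \<le> i' \<Longrightarrow> i' \<le> n \<Longrightarrow> u i' \<le> u i"
      and "\<And>j j'. 1 \<le> j \<Longrightarrow> j \<le> j' \<Longrightarrow> j' \<le> n \<Longrightarrow> v j' \<le> v j"
      and "event_a n u v eA eP"
      and "event_b n u v eA eP"
  shows "\<forall>t. \<forall>k\<in>{1..n}.
     real (card {(i, j). i \<in> {1..n} \<and> muA (run n u v eA eP t) i = Some j \<and> k \<le> i \<and> j < k})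
       \<le> 8 * log 2 (real n)"
proof (intro allI ballI)
  fix t k assume k: "k \<in> {1..n}"
  define s where "s = run n u v eA eP t"
  define L where "L = 8 * log 2 (real n)"
  define S where "S = {(i, j). i \<in> {1..n} \<and> muA s i = Some j \<and> k \<le> i \<and> j < k}"
  have n1: "n \<ge> 1" using k by auto
  have L0: "L \<ge> 0" unfolding L_def using n1 by simp
  define m where "m = nat \<lfloor>L\<rfloor>"
  have inv: "Inv s" unfolding s_def by (rule Inv_run)
  have inj: "inj_on snd S"
    using inv unfolding Inv_def S_def inj_on_def by auto
  have sub: "snd ` S \<subseteq> {k - m..<k}"
  proof
    fix j assume "j \<in> snd ` S"
    then obtain i where i: "i \<in> {1..n}" "muA s i = Some j" "k \<le> i" "j < k"
      unfolding S_def by auto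
    have "(i, j) \<in> interviewed s" using inv i unfolding Inv_def by auto
    then have "real i \<le> real j + L" using assms(3) unfolding event_a_def s_def L_def by blast
    then have "real k - real j \<le> L" using i by simp
    then have "int k - int j \<le> \<lfloor>L\<rfloor>" by (simp add: le_floor_iff)
    then have "k - m \<le> j" unfolding m_def using L0 by linarith
    then show "j \<in> {k - m..<k}" using i by auto
  qed
  have "card S = card (snd ` S)" using inj by (simp add: card_image)
  also have "\<dots> \<le> card {k - m..<k}" using sub by (intro card_mono) auto
  also have "\<dots> \<le> m" by simp
  finally have "real (card S) \<le> real m" by simp
  also have "real m \<le> L" unfolding m_def using L0 by linarith
  finally show "real (card {(i, j). i \<in> {1..n} \<and> muA (run n u v eA eP t) i = Some j \<and> k \<le> i \<and> j < k})
       \<le> 8 * log 2 (real n)" unfolding S_def s_def L_def .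
qed

end
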